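(* Let $\hbar$ and $\tilde t_1,\tilde t_2,\dots$ be formal parameters, $D=x\frac{\partial}{\partial x}$, and let $$\Psi^{mm}(x,\hbar):=\sum_{j\ge0}s_{(j)}(\tilde{\mathbf t}/\hbar)\,x^j\prod_{l=1}^j\frac{1}{1-\hbar(l-1)}$$ (the first basis vector $\Phi^{mm}_1$ with $\beta=\hbar$ and $\tilde t_k\mapsto\tilde t_k/\hbar$). Then $A_{mm}\Psi^{mm}=0$, where $$A_{mm}:=\sum_{k\ge1}k\tilde t_k\,x^k\prod_{j=0}^{k-1}\frac{1}{1-\hbar(D+j)}-\hbar D$$ (the product of operators in $D$ acts first, then multiplication by $x^k$). If moreover $\tilde t_k=0$ for all $k>l$, then $\tilde A_{mm}\Psi^{mm}=0$ for the polynomial operator $$\tilde A_{mm}=\sum_{k=1}^lk\tilde t_k\hat x^k\prod_{j=1}^{l-k}(1+\hat x\hat y+\hbar j)+\hat x\hat y\prod_{j=1}^l(1+\hat x\hat y+\hbar j),\qquad \hat x=x\cdot,\ \hat y=-\hbar\frac{\partial}{\partial x}.$$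
   Context: $s_{(j)}$ is defined by $\exp(\sum_{m\ge1}t_mx^m)=\sum_{j\ge0}s_{(j)}(\mathbf t)x^j$, and $\tilde{\mathbf t}/\hbar=(\tilde t_1/\hbar,\tilde t_2/\hbar,\dots)$. All expressions are formal power series in $x$ with coefficients formal in $\hbar$ and $\tilde{\mathbf t}$; operators $f(D)$ act on $x^m$ by multiplication by $f(m)$. *)

theory Defs
  imports "HOL-Computational_Algebra.Formal_Power_Series"
          "HOL-Computational_Algebra.Formal_Laurent_Series"
begin

(* Coefficient ring: 'a fls = formal Laurent series in hbar over a field 'a of char 0.
   hbar is the formal variable fls_X; the parameters t~_k are constants fls_const (c k),
   with c k arbitrary elements of 'a (taking 'a = Q(t_1,t_2,...) gives formal t's). *)

definition hbar :: "'a::field_char_0 fls" where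
  "hbar = fls_X"

definition ttil :: "(nat \<Rightarrow> 'a::field_char_0) \<Rightarrow> nat \<Rightarrow> 'a fls" where
  "ttil c k = fls_const (c k)"

definition schur_row :: "(nat \<Rightarrow> 'b::field_char_0) \<Rightarrow> nat \<Rightarrow> 'b" where
  "schur_row t j = (fps_exp 1 oo Abs_fps (\<lambda>m. if m = 0 then 0 else t m)) $ j"

definition Psi_mm :: "(nat \<Rightarrow> 'a::field_char_0) \<Rightarrow> 'a fls fps" where
  "Psi_mm c = Abs_fps (\<lambda>j. schur_row (\<lambda>m. ttil c m / hbar) j *
       (\<Prod>l=1..j. inverse (1 - hbar * of_nat (l - 1))))"

(* f(D) acts on x^m by multiplication by f(m) *)
definition D_op :: "(nat \<Rightarrow> 'b::comm_ring_1) \<Rightarrow> 'b fps \<Rightarrow> 'b fps" where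
  "D_op f F = Abs_fps (\<lambda>m. f m * F $ m)"

definition A_trunc :: "(nat \<Rightarrow> 'a::field_char_0) \<Rightarrow> nat \<Rightarrow> 'a fls fps \<Rightarrow> 'a fls fps" where
  "A_trunc c N F = (\<Sum>k=1..N. fps_const (of_nat k * ttil c k) * fps_X ^ k *
       D_op (\<lambda>m. \<Prod>j<k. inverse (1 - hbar * of_nat (m + j))) F)"

(* the infinite sum over k: the coefficient of x^n only receives terms with k <= n,
   so it equals the coefficient of x^n of the partial sum up to n *)
definition A_mm :: "(nat \<Rightarrow> 'a::field_char_0) \<Rightarrow> 'a fls fps \<Rightarrow> 'a fls fps" where
  "A_mm c F = Abs_fps (\<lambda>n. A_trunc c n F $ n) - fps_const hbar * D_op of_nat F"

definition xhat :: "'a::field_char_0 fls fps \<Rightarrow> 'a fls fps" where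
  "xhat F = fps_X * F"

definition yhat :: "'a::field_char_0 fls fps \<Rightarrow> 'a fls fps" where
  "yhat F = fps_const (- hbar) * fps_deriv F"

definition Bop :: "nat \<Rightarrow> 'a::field_char_0 fls fps \<Rightarrow> 'a fls fps" where
  "Bop j F = F + xhat (yhat F) + fps_const (hbar * of_nat j) * F"

(* operator product prod_{j=1}^n Bop j (the factors commute) *)
definition Bprod :: "nat \<Rightarrow> 'a::field_char_0 fls fps \<Rightarrow> 'a fls fps" where
  "Bprod n = foldr (\<circ>) (map Bop [1..<n+1]) id"

definition Atil_mm :: "(nat \<Rightarrow> 'a::field_char_0) \<Rightarrow> nat \<Rightarrow> 'a fls fps \<Rightarrow> 'a fls fps" where
  "Atil_mm c l F = (\<Sum>k=1..l. fps_const (of_nat k * ttil c k) * (xhat ^^ k) (Bprod (l - k) F))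
                   + xhat (yhat (Bprod l F))"

end

theory Submission
  imports Defs
begin

lemma a_nz: "(1 - hbar * of_nat m :: 'a::field_char_0 fls) \<noteq> 0"
proof
  assume h: "1 - hbar * of_nat m = (0::'a fls)"
  have "fls_nth (1 - hbar * of_nat m :: 'a fls) 0 = 1"
    unfolding hbar_def by (simp add: fls_of_nat fls_times_nth(1))
  with h show False by simp
qed

lemma hbar_nz: "(hbar :: 'a::field_char_0 fls) \<noteq> 0"
  by (simp add: hbar_def)

lemma XD: "(fps_X * fps_deriv F) $ n = of_nat n * (F::'b::comm_ring_1 fps) $ n"
  by (cases n) (simp_all add: algebra_simps)

lemma schur_rec:
  fixes u :: "nat \<Rightarrow> 'b::field_char_0"
  shows "of_nat n * schur_row u n = (\<Sum>k=1..n. of_nat k * u k * schur_row u (n-k))"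
proof -
  define G where "G = Abs_fps (\<lambda>m. if m = 0 then 0 else u m)"
  define E where "E = fps_exp 1 oo G"
  have G0: "G$0 = 0" by (simp add: G_def)
  have dE: "fps_deriv E = E * fps_deriv G" unfolding E_def
    using fps_compose_deriv[OF G0, of "fps_exp 1"] by simp
  have "fps_X * fps_deriv E = (fps_X * fps_deriv G) * E" by (simp add: dE mult_ac)
  then have "(fps_X * fps_deriv E) $ n = ((fps_X * fps_deriv G) * E) $ n"
    by (rule arg_cong[where f="\<lambda>F. F $ n"])
  then have "of_nat n * E $ n = (\<Sum>i=0..n. of_nat i * G $ i * E $ (n - i))"
    by (simp only: XD fps_mult_nth[of "fps_X * fps_deriv G" E])
  also have "\<dots> = (\<Sum>i=1..n. of_nat i * G $ i * E $ (n - i))"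
    by (simp add: sum.atLeast_Suc_atMost)
  also have "\<dots> = (\<Sum>k=1..n. of_nat k * u k * E $ (n-k))"
    by (rule sum.cong) (auto simp: G_def)
  finally show ?thesis by (simp add: schur_row_def E_def G_def)
qed

lemma Bop_nth: "Bop j F $ n = (1 - hbar * of_nat n + hbar * of_nat j) * F $ n"
  unfolding Bop_def xhat_def yhat_def by (cases n) (simp_all add: algebra_simps)

lemma foldr_comp: "foldr (\<circ>) fs g = foldr (\<circ>) fs id \<circ> g"
  by (induction fs) auto

lemma Bprod_Suc: "Bprod (Suc m) F = Bprod m (Bop (Suc m) F)"
proof -
  have "[1..<Suc m + 1] = [1..<m+1] @ [Suc m]" by simp
  then show ?thesis unfolding Bprod_def
    by (simp only: map_append foldr_append) (simp add: foldr_comp[of _ "Bop (Suc m)"])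
qed

lemma Bprod_nth: "Bprod m F $ n = (\<Prod>j=1..m. 1 - hbar*of_nat n + hbar*of_nat j) * F$n"
proof (induction m arbitrary: F)
  case 0
  then show ?case by (simp add: Bprod_def)
next
  case (Suc m)
  show ?case by (simp add: Bprod_Suc Suc Bop_nth prod.cl_ivl_Suc mult_ac)
qed

lemma xhat_pow: "(xhat ^^ k) F = fps_X ^ k * F"
  by (induction k) (simp_all add: xhat_def mult_ac)

definition PP :: "nat \<Rightarrow> 'a::field_char_0 fls" where
  "PP n = (\<Prod>i<n. inverse (1 - hbar * of_nat i))"

lemma PP_eq: "(\<Prod>l=1..n. inverse (1 - hbar * of_nat (l - 1))) = (PP n :: 'a::field_char_0 fls)"
  unfolding PP_def by (induction n) (simp_all add: prod.cl_ivl_Suc mult_ac)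

lemma Psi_nth: "Psi_mm c $ n = schur_row (\<lambda>m. ttil c m / hbar) n * PP n"
  unfolding Psi_mm_def PP_eq by simp

lemma prod_split: "(\<Prod>i<(a::nat). f i) * (\<Prod>j<(b::nat). f (a+j)) = (\<Prod>i<a+b. (f i :: 'b::comm_monoid_mult))"
proof (induction b)
  case (Suc b)
  have "(\<Prod>i<a. f i) * (\<Prod>j<Suc b. f (a+j)) = f (a+b) * ((\<Prod>i<a. f i) * (\<Prod>j<b. f (a+j)))"
    by (simp add: mult_ac)
  then show ?case using Suc by (simp add: mult.commute)
qed simp


lemma ttil_eq: "ttil c k = hbar * (ttil c k / hbar)"
  by (simp add: hbar_nz)

lemma part1: "A_mm c (Psi_mm c) = 0"
proof (rule fps_ext)
  fix n
  define u where "u = (\<lambda>m. ttil c m / hbar)"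
  define s where "s = schur_row u"
  have trm: "(fps_const (of_nat k * ttil c k) * fps_X ^ k *
       D_op (\<lambda>m. \<Prod>j<k. inverse (1 - hbar * of_nat (m + j))) (Psi_mm c)) $ n
       = hbar * PP n * (of_nat k * u k * s (n-k))" if k: "k \<in> {1..n}" for k
  proof -
    have kn: "\<not> n < k" "n - k + k = n" using k by auto
    have P: "PP (n-k) * (\<Prod>j<k. inverse (1 - hbar * of_nat (n - k + j))) = PP n"
      unfolding PP_def using prod_split[of "\<lambda>i. inverse (1 - hbar * of_nat i)" "n-k" k] kn(2)
      by simp
    have "(fps_const (of_nat k * ttil c k) * fps_X ^ k *
       D_op (\<lambda>m. \<Prod>j<k. inverse (1 - hbar * of_nat (m + j))) (Psi_mm c)) $ n
       = of_nat k * ttil c k * ((\<Prod>j<k. inverse (1 - hbar * of_nat (n - k + j))) * (s (n-k) * PP (n-k)))"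
      by (simp only: mult.assoc fps_mult_left_const_nth fps_X_power_mult_nth kn(1) if_False
           D_op_def fps_nth_Abs_fps Psi_nth s_def u_def)
    also have "\<dots> = of_nat k * ttil c k * s (n-k) * (PP (n-k) * (\<Prod>j<k. inverse (1 - hbar * of_nat (n - k + j))))"
      by (simp add: mult_ac)
    also have "\<dots> = hbar * PP n * (of_nat k * u k * s (n-k))"
      unfolding P by (subst ttil_eq) (simp add: u_def mult_ac)
    finally show ?thesis .
  qed
  have "A_mm c (Psi_mm c) $ n = (\<Sum>k=1..n. hbar * PP n * (of_nat k * u k * s (n-k)))
        - hbar * of_nat n * (s n * PP n)"
  proof -
    have 1: "A_trunc c n (Psi_mm c) $ n = (\<Sum>k=1..n. hbar * PP n * (of_nat k * u k * s (n-k)))"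
      unfolding A_trunc_def fps_sum_nth by (rule sum.cong[OF refl trm])
    have 2: "(fps_const hbar * D_op of_nat (Psi_mm c)) $ n = hbar * of_nat n * (s n * PP n)"
      by (simp add: D_op_def Psi_nth s_def u_def)
    show ?thesis unfolding A_mm_def fps_sub_nth fps_nth_Abs_fps 1 2 ..
  qed
  also have "\<dots> = hbar * PP n * (of_nat n * s n) - hbar * of_nat n * (s n * PP n)"
    by (simp only: sum_distrib_left[symmetric] s_def schur_rec)
  also have "\<dots> = 0" by (simp add: mult_ac)
  finally show "A_mm c (Psi_mm c) $ n = 0 $ n" by simp
qed


definition BB :: "nat \<Rightarrow> nat \<Rightarrow> 'a::field_char_0 fls" where
  "BB m j = 1 - hbar * of_nat m + hbar * of_nat j"

lemma Bprod_nth': "Bprod m F $ n = (\<Prod>j=1..m. BB n j) * F$n"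
  by (simp add: Bprod_nth BB_def)

lemma step: "(\<Prod>j=1..Suc d. BB (Suc m) j) * PP (Suc m) = (\<Prod>j=1..d. BB m j) * (PP m :: 'a::field_char_0 fls)"
proof -
  have "(\<Prod>j=1..Suc d. BB (Suc m) j) = BB (Suc m) 1 * (\<Prod>j=Suc 1..Suc d. (BB (Suc m) j :: 'a fls))"
    by (simp add: prod.atLeast_Suc_atMost)
  also have "(\<Prod>j=Suc 1..Suc d. BB (Suc m) j) = (\<Prod>j=1..d. (BB (Suc m) (Suc j) :: 'a fls))"
    by (rule prod.shift_bounds_cl_Suc_ivl)
  also have "\<dots> = (\<Prod>j=1..d. BB m j)"
    by (rule prod.cong) (simp_all add: BB_def algebra_simps)
  finally have 1: "(\<Prod>j=1..Suc d. BB (Suc m) j) = (1 - hbar * of_nat m) * (\<Prod>j=1..d. (BB m j :: 'a fls))"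
    by (simp add: BB_def algebra_simps)
  have 2: "PP (Suc m) = PP m * inverse (1 - hbar * of_nat m :: 'a fls)"
    by (simp add: PP_def)
  show ?thesis unfolding 1 2 using a_nz[of m, where 'a='a]
    by (simp add: field_simps)
qed

lemma gconst: "k \<le> n \<Longrightarrow> k \<le> l \<Longrightarrow>
   (\<Prod>j=1..l-k. BB (n-k) j) * PP (n-k) = (\<Prod>j=1..l. BB n j) * (PP n :: 'a::field_char_0 fls)"
proof (induction k)
  case (Suc k)
  have e1: "n - k = Suc (n - Suc k)" "l - k = Suc (l - Suc k)" using Suc.prems by auto
  have "(\<Prod>j=1..l - Suc k. BB (n - Suc k) j) * (PP (n - Suc k) :: 'a fls)
        = (\<Prod>j=1..l-k. BB (n-k) j) * PP (n-k)"
    unfolding e1 by (rule step[symmetric])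
  also have "\<dots> = (\<Prod>j=1..l. BB n j) * PP n" using Suc by simp
  finally show ?case .
qed simp

lemma part2:
  fixes c :: "nat \<Rightarrow> 'a::field_char_0"
  assumes l: "\<forall>k>l. c k = 0"
  shows "Atil_mm c l (Psi_mm c) = 0"
proof (rule fps_ext)
  fix n
  define u where "u = (\<lambda>m. ttil c m / hbar)"
  define s where "s = schur_row u"
  define R where "R = (\<Prod>j=1..l. BB n j) * (PP n :: 'a fls)"
  define g where "g = (\<lambda>k. of_nat k * ttil c k * s (n-k))"
  have g0: "g k = 0" if "k > l" for k using l that by (simp add: g_def ttil_def)
  have trm: "(fps_const (of_nat k * ttil c k) * (xhat ^^ k) (Bprod (l - k) (Psi_mm c))) $ n
      = (if n < k then 0 else g k) * R" if k: "k \<in> {1..l}" for k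
  proof (cases "n < k")
    case True
    then show ?thesis by (simp add: xhat_pow fps_X_power_mult_nth)
  next
    case False
    have "(fps_const (of_nat k * ttil c k) * (xhat ^^ k) (Bprod (l - k) (Psi_mm c))) $ n
       = of_nat k * ttil c k * s (n-k) * ((\<Prod>j=1..l-k. BB (n-k) j) * PP (n-k))"
      using False by (simp add: xhat_pow fps_X_power_mult_nth Bprod_nth' Psi_nth s_def u_def mult_ac)
    also have "\<dots> = g k * R" unfolding R_def g_def using False k gconst[of k n l, where 'a='a] by simp
    finally show ?thesis using False by simp
  qed
  have sum1: "(\<Sum>k=1..l. (if n < k then 0 else g k)) = (\<Sum>k=1..n. g k)"
  proof -
    have "(\<Sum>k=1..l. (if n < k then 0 else g k)) = (\<Sum>k=1..n+l. (if n < k then 0 else g k))"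
      by (rule sum.mono_neutral_left) (auto simp: g0)
    also have "\<dots> = (\<Sum>k=1..n. (if n < k then 0 else g k))"
      by (rule sum.mono_neutral_right) auto
    also have "\<dots> = (\<Sum>k=1..n. g k)" by (rule sum.cong) auto
    finally show ?thesis .
  qed
  have sum2: "(\<Sum>k=1..n. g k) = hbar * (of_nat n * s n)"
  proof -
    have "(\<Sum>k=1..n. g k) = (\<Sum>k=1..n. hbar * (of_nat k * u k * s (n-k)))"
      unfolding g_def u_def by (rule sum.cong[OF refl]) (subst ttil_eq, simp add: mult_ac)
    also have "\<dots> = hbar * (of_nat n * s n)"
      by (simp only: sum_distrib_left[symmetric] s_def schur_rec)
    finally show ?thesis .
  qed
  have sec: "xhat (yhat (Bprod l (Psi_mm c))) $ n = - hbar * of_nat n * (s n * R)"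
  proof -
    have "xhat (yhat (Bprod l (Psi_mm c))) = fps_const (- hbar) * (fps_X * fps_deriv (Bprod l (Psi_mm c)))"
      by (simp add: xhat_def yhat_def mult_ac)
    then show ?thesis
      by (simp only: fps_mult_left_const_nth XD Bprod_nth' Psi_nth R_def s_def u_def)
         (simp add: mult_ac)
  qed
  have "Atil_mm c l (Psi_mm c) $ n = (\<Sum>k=1..l. (if n < k then 0 else g k) * R) + - hbar * of_nat n * (s n * R)"
    unfolding Atil_mm_def fps_add_nth fps_sum_nth sec by (simp only: sum.cong[OF refl trm])
  also have "\<dots> = 0"
    by (simp only: sum_distrib_right[symmetric] sum1 sum2) (simp add: mult_ac)
  finally show "Atil_mm c l (Psi_mm c) $ n = 0 $ n" by simp
qed

theorem mainTheorem6:
  fixes c :: "nat \<Rightarrow> 'a::field_char_0"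
  shows "A_mm c (Psi_mm c) = 0 \<and>
         (\<forall>l. (\<forall>k>l. c k = 0) \<longrightarrow> Atil_mm c l (Psi_mm c) = 0)"
  using part1 part2 by blast

end
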